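(* Let $G$ be a finite group of order $n$ and $\ell$ an integer. If the exponent of $G$ does not divide $\ell$, then $$\frac{|\{g\in G:g^\ell=1\}|}{n}\le 1-\frac1{\sqrt{2n}}.$$ *)

theory Defs
  imports "HOL-Analysis.Analysis" "HOL-Algebra.Algebra"
begin

definition group_exponent :: "('a, 'b) monoid_scheme \<Rightarrow> nat" where
  "group_exponent G = Lcm ((\<lambda>g. group.ord G g) ` carrier G)"

end

theory Submission
  imports Defs
begin

lemma (in group) inv_cancel_aux:
  "g \<in> carrier G \<Longrightarrow> w \<in> carrier G \<Longrightarrow> inv g \<otimes> (g \<otimes> w) = w"
  by (simp add: m_assoc[symmetric])

lemma (in group) conj_hom_aux:
  assumes g: "g \<in> carrier G"
  shows "(\<lambda>h. g \<otimes> h \<otimes> inv g) \<in> hom G G"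
  unfolding hom_def
proof (intro CollectI conjI ballI)
  show "(\<lambda>h. g \<otimes> h \<otimes> inv g) \<in> carrier G \<rightarrow> carrier G" using g by auto
next
  fix x y assume x: "x \<in> carrier G" and y: "y \<in> carrier G"
  have c: "\<And>w. w \<in> carrier G \<Longrightarrow> inv g \<otimes> (g \<otimes> w) = w"
    using g by (simp add: m_assoc[symmetric])
  have "g \<otimes> x \<otimes> inv g \<otimes> (g \<otimes> y \<otimes> inv g) = g \<otimes> x \<otimes> (inv g \<otimes> g) \<otimes> y \<otimes> inv g"
    using g x y by (simp add: m_assoc c)
  also have "\<dots> = g \<otimes> (x \<otimes> y) \<otimes> inv g" using g x y by (simp add: l_inv m_assoc)
  finally show "g \<otimes> (x \<otimes> y) \<otimes> inv g = g \<otimes> x \<otimes> inv g \<otimes> (g \<otimes> y \<otimes> inv g)" by simp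
qed

lemma (in group) conj_int_pow:
  assumes g: "g \<in> carrier G" and a: "a \<in> carrier G"
  shows "(g \<otimes> a \<otimes> inv g) [^] (i::int) = g \<otimes> a [^] i \<otimes> inv g"
  using hom_int_pow[OF conj_hom_aux[OF g] a is_group is_group] by simp

theorem theorem2p9:
  fixes G (structure) and n :: nat and l :: int
  assumes "group G" and "finite (carrier G)" and "order G = n"
    and "\<not> int (group_exponent G) dvd l"
  shows "real (card {g \<in> carrier G. g [^]\<^bsub>G\<^esub> l = \<one>\<^bsub>G\<^esub>}) / real n
           \<le> 1 - 1 / sqrt (2 * real n)"
proof -
  interpret group G by fact
  define S where "S = {g \<in> carrier G. g [^] l = \<one>}"
  define T where "T = carrier G - S"
  define m where "m = card T"
  have fin: "finite (carrier G)" by fact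
  have n: "n = card (carrier G)" using assms(3) unfolding order_def by simp
  obtain a where a: "a \<in> carrier G" "a [^] l \<noteq> \<one>"
  proof (rule ccontr)
    assume "\<not> thesis"
    with that have all: "\<forall>g\<in>carrier G. g [^] l = \<one>" by blast
    have hh: "\<forall>g\<in>carrier G. ord g dvd nat \<bar>l\<bar>"
    proof
      fix g assume "g \<in> carrier G"
      then have "int (ord g) dvd l" using all int_pow_eq_id by blast
      then have "int (ord g) dvd int (nat \<bar>l\<bar>)" by simp
      then show "ord g dvd nat \<bar>l\<bar>" by (simp only: int_dvd_int_iff)
    qed
    then have "group_exponent G dvd nat \<bar>l\<bar>"
      unfolding group_exponent_def using hh by (metis Lcm_least imageE)
    then have "int (group_exponent G) dvd int (nat \<bar>l\<bar>)" by (simp only: int_dvd_int_iff)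
    then have "int (group_exponent G) dvd l" by simp
    with assms(4) show False by simp
  qed
  have aT: "a \<in> T" using a unfolding T_def S_def by auto
  have finT: "finite T" using fin unfolding T_def by auto
  have finS: "finite S" using fin unfolding S_def by auto
  define \<phi> where "\<phi> = (\<lambda>g. \<lambda>h \<in> carrier G. g \<otimes> h \<otimes> inv g)"
  interpret A: group_action G "carrier G" \<phi>
    unfolding \<phi>_def by (rule action_by_conjugation)
  have os: "card (orbit G \<phi> a) * card (stabilizer G \<phi> a) = n"
    using A.orbit_stabilizer_theorem[OF a(1)] assms(3) by simp
  have orbT: "orbit G \<phi> a \<subseteq> T"
  proof
    fix y assume "y \<in> orbit G \<phi> a"
    then obtain g where g: "g \<in> carrier G" "y = g \<otimes> a \<otimes> inv g"
      unfolding orbit_def \<phi>_def using a by auto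
    have "y [^] l = g \<otimes> a [^] l \<otimes> inv g" using g a conj_int_pow by simp
    moreover have "g \<otimes> a [^] l \<otimes> inv g \<noteq> \<one>"
    proof
      assume h: "g \<otimes> a [^] l \<otimes> inv g = \<one>"
      have "a [^] l = inv g \<otimes> (g \<otimes> a [^] l \<otimes> inv g) \<otimes> g"
        using g a by (simp add: m_assoc inv_cancel_aux)
      also have "\<dots> = \<one>" using h g by simp
      finally show False using a by simp
    qed
    ultimately show "y \<in> T" using g a unfolding T_def S_def by auto
  qed
  have c1: "card (orbit G \<phi> a) \<le> m"
    unfolding m_def using orbT finT by (rule card_mono[rotated])
  define St where "St = stabilizer G \<phi> a"
  have comm: "x \<otimes> a = a \<otimes> x" if "x \<in> St" for x
  proof -
    have x: "x \<in> carrier G" "x \<otimes> a \<otimes> inv x = a"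
      using that a unfolding St_def stabilizer_def \<phi>_def by auto
    have "x \<otimes> a = x \<otimes> a \<otimes> inv x \<otimes> x" using x(1) a by (simp add: m_assoc)
    also have "\<dots> = a \<otimes> x" using x by simp
    finally show ?thesis .
  qed
  have StG: "St \<subseteq> carrier G" unfolding St_def stabilizer_def by auto
  have "(\<lambda>x. x \<otimes> a) ` (St \<inter> S) \<subseteq> T"
  proof
    fix y assume "y \<in> (\<lambda>x. x \<otimes> a) ` (St \<inter> S)"
    then obtain x where x: "x \<in> St" "x \<in> S" "y = x \<otimes> a" by auto
    have xc: "x \<in> carrier G" using x StG by auto
    have "y [^] l = x [^] l \<otimes> a [^] l"
      using x xc a comm int_pow_mult_distrib by simp
    also have "\<dots> = a [^] l" using x(2) a unfolding S_def by simp
    finally show "y \<in> T" using a xc x unfolding T_def S_def by auto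
  qed
  moreover have "inj_on (\<lambda>x. x \<otimes> a) (St \<inter> S)"
  proof (rule inj_onI)
    fix x y assume "x \<in> St \<inter> S" "y \<in> St \<inter> S" "x \<otimes> a = y \<otimes> a"
    then have "x \<in> carrier G" "y \<in> carrier G" using StG by auto
    then show "x = y" using a \<open>x \<otimes> a = y \<otimes> a\<close> by simp
  qed
  ultimately have cS: "card (St \<inter> S) \<le> m"
    unfolding m_def using finT card_image card_mono by metis
  have cT: "card (St \<inter> T) \<le> m"
    unfolding m_def using finT by (intro card_mono) auto
  have "St = (St \<inter> S) \<union> (St \<inter> T)" using StG unfolding T_def by auto
  then have "card St \<le> card (St \<inter> S) + card (St \<inter> T)"
    by (metis card_Un_le)
  with cS cT have c2: "card St \<le> 2 * m" by simp
  have nle: "n \<le> 2 * m * m"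
  proof -
    have "n = card (orbit G \<phi> a) * card St" using os St_def by simp
    also have "\<dots> \<le> m * (2 * m)" using c1 c2 by (intro mult_le_mono)
    finally show ?thesis by simp
  qed
  have cardS: "card S + m = n"
  proof -
    have "S \<subseteq> carrier G" unfolding S_def by auto
    then show ?thesis using card_Diff_subset[of S "carrier G"] card_mono[OF fin \<open>S \<subseteq> carrier G\<close>] finS
      unfolding m_def T_def n by simp
  qed
  have npos: "n > 0" using n fin a(1) card_gt_0_iff by auto
  have key: "real n \<le> real m * sqrt (2 * real n)"
  proof -
    have "real n \<le> real (2 * m * m)" using nle by (simp only: of_nat_le_iff)
    then have h1: "real n \<le> 2 * real m * real m" by simp
    have "real n * real n \<le> real n * (2 * real m * real m)"
      using h1 by (intro mult_left_mono) auto
    also have "\<dots> = (real m * sqrt (2 * real n))^2"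
      by (simp add: power_mult_distrib real_sqrt_pow2 power2_eq_square del: of_nat_mult) 
    finally have "(real n)^2 \<le> (real m * sqrt (2 * real n))^2"
      by (simp only: power2_eq_square)
    then show ?thesis
      by (rule power2_le_imp_le) simp
  qed
  have sq: "sqrt (2 * real n) > 0" using npos by simp
  have "1 / sqrt (2 * real n) \<le> real m / real n"
  proof -
    have "1 / sqrt (2 * real n) = real n / sqrt (2 * real n) / real n" using npos by simp
    also have "\<dots> \<le> real m / real n"
      using key sq npos by (intro divide_right_mono) (auto simp: pos_divide_le_eq)
    finally show ?thesis .
  qed
  moreover have "real (card S) / real n = 1 - real m / real n"
  proof -
    have "real (card S) = real n - real m" using cardS by linarith
    then show ?thesis using npos by (simp add: diff_divide_distrib)
  qed
  ultimately show ?thesis unfolding S_def[symmetric] by simp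
qed

end
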